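(* Let $\mathcal G$ be a doubly connected molecular graph. Construct $\mathcal G_{new}$ from $\mathcal G$ as follows: add a new molecule $\mathcal M_{new}$; replace a diffusive edge $b_0$ of $\mathcal G$ joining molecules $\mathcal M_1$ and $\mathcal M_2$ by two diffusive edges, $b_1$ joining $\mathcal M_1$ and $\mathcal M_{new}$ and $b_2$ joining $\mathcal M_2$ and $\mathcal M_{new}$; and replace another diffusive edge $b\neq b_0$ of $\mathcal G$ joining molecules $\mathcal M_3$ and $\mathcal M_4$ by two diffusive edges, $b_3$ joining $\mathcal M_3$ and $\mathcal M_{new}$ and $b_4$ joining $\mathcal M_4$ and $\mathcal M_{new}$. If a blue solid edge is redundant in $\mathcal G$, then it is also redundant in $\mathcal G_{new}$.
   Context: A molecular graph is a finite multigraph whose vertices are called molecules and each of whose edges joins two distinct molecules and is either a diffusive edge or a blue solid edge (parallel edges are allowed). A molecular graph is doubly connected if there exist two disjoint sets of edges, $\mathcal B_{black}$ consisting only of diffusive edges and $\mathcal B_{blue}$ consisting only of blue solid or diffusive edges, such that each of $\mathcal B_{black}$ and $\mathcal B_{blue}$ contains a spanning tree of the set of all molecules. A blue solid edge $e$ of a doubly connected graph is redundant if the graph obtained by deleting $e$ is still doubly connected. *)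

theory Defs
  imports Main
begin

datatype edge_kind = Diffusive | BlueSolid

text \<open>A molecular graph: molecules V, edge identifiers E (multigraph, parallel edges
allowed), endpoints ep e = (u,w) of an edge, and the kind of each edge.\<close>

definition molecular_graph ::
  "'v set \<Rightarrow> 'e set \<Rightarrow> ('e \<Rightarrow> 'v \<times> 'v) \<Rightarrow> ('e \<Rightarrow> edge_kind) \<Rightarrow> bool" where
  "molecular_graph V E ep kd \<longleftrightarrow> finite V \<and> finite E \<and>
     (\<forall>e\<in>E. fst (ep e) \<in> V \<and> snd (ep e) \<in> V \<and> fst (ep e) \<noteq> snd (ep e))"

definition joins :: "('e \<Rightarrow> 'v \<times> 'v) \<Rightarrow> 'e \<Rightarrow> 'v \<Rightarrow> 'v \<Rightarrow> bool" where
  "joins ep e u w \<longleftrightarrow> ep e = (u, w) \<or> ep e = (w, u)"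

definition adj :: "('e \<Rightarrow> 'v \<times> 'v) \<Rightarrow> 'e set \<Rightarrow> ('v \<times> 'v) set" where
  "adj ep T = {(u, w). \<exists>e\<in>T. joins ep e u w}"

definition connected_on :: "'v set \<Rightarrow> ('e \<Rightarrow> 'v \<times> 'v) \<Rightarrow> 'e set \<Rightarrow> bool" where
  "connected_on V ep T \<longleftrightarrow> (\<forall>u\<in>V. \<forall>w\<in>V. (u, w) \<in> (adj ep T)\<^sup>*)"

text \<open>T is a spanning tree of V: connected on V, and acyclic (every edge is a bridge,
i.e. T is minimally connected).\<close>
definition spanning_tree :: "'v set \<Rightarrow> ('e \<Rightarrow> 'v \<times> 'v) \<Rightarrow> 'e set \<Rightarrow> bool" where
  "spanning_tree V ep T \<longleftrightarrow> connected_on V ep T \<and>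
     (\<forall>e\<in>T. \<not> connected_on V ep (T - {e}))"

definition contains_spanning_tree :: "'v set \<Rightarrow> ('e \<Rightarrow> 'v \<times> 'v) \<Rightarrow> 'e set \<Rightarrow> bool" where
  "contains_spanning_tree V ep S \<longleftrightarrow> (\<exists>T\<subseteq>S. spanning_tree V ep T)"

definition doubly_connected ::
  "'v set \<Rightarrow> 'e set \<Rightarrow> ('e \<Rightarrow> 'v \<times> 'v) \<Rightarrow> ('e \<Rightarrow> edge_kind) \<Rightarrow> bool" where
  "doubly_connected V E ep kd \<longleftrightarrow>
     (\<exists>Bblack Bblue. Bblack \<subseteq> E \<and> Bblue \<subseteq> E \<and> Bblack \<inter> Bblue = {} \<and>
        (\<forall>e\<in>Bblack. kd e = Diffusive) \<and>
        (\<forall>e\<in>Bblue. kd e = BlueSolid \<or> kd e = Diffusive) \<and>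
        contains_spanning_tree V ep Bblack \<and> contains_spanning_tree V ep Bblue)"

definition redundant ::
  "'v set \<Rightarrow> 'e set \<Rightarrow> ('e \<Rightarrow> 'v \<times> 'v) \<Rightarrow> ('e \<Rightarrow> edge_kind) \<Rightarrow> 'e \<Rightarrow> bool" where
  "redundant V E ep kd e \<longleftrightarrow> e \<in> E \<and> kd e = BlueSolid \<and>
     doubly_connected V E ep kd \<and> doubly_connected V (E - {e}) ep kd"

end

theory Submission
  imports Defs
begin


definition pr :: "'v \<Rightarrow> 'v \<Rightarrow> ('v \<times> 'v) set" where
  "pr p q = {(p,q),(q,p)}"

lemma adj_sym: "sym (adj ep T)"
  by (auto simp: sym_def adj_def joins_def)

lemma rt_sym: "(u,w) \<in> (adj ep T)\<^sup>* \<Longrightarrow> (w,u) \<in> (adj ep T)\<^sup>*"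
  using sym_rtrancl[OF adj_sym[of ep T]] by (auto simp: sym_def)

lemma edge_adj: "x \<in> Y \<Longrightarrow> ep x = (p,q) \<Longrightarrow> (p,q) \<in> adj ep Y \<and> (q,p) \<in> adj ep Y"
  by (auto simp: adj_def joins_def)

lemma adj_mono: "X \<subseteq> Y \<Longrightarrow> adj ep X \<subseteq> adj ep Y"
  by (auto simp: adj_def)

lemma conn_mono: "connected_on V ep X \<Longrightarrow> X \<subseteq> Y \<Longrightarrow> connected_on V ep Y"
  unfolding connected_on_def using rtrancl_mono[OF adj_mono] by blast

lemma adj_cong: "\<forall>x\<in>X. ep' x = ep x \<Longrightarrow> adj ep' X = adj ep X"
  by (auto simp: adj_def joins_def)

lemma adj_Un: "adj ep (A \<union> B) = adj ep A \<union> adj ep B"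
  by (auto simp: adj_def)

lemma adj_single: "ep x = (p,q) \<Longrightarrow> adj ep {x} = pr p q"
  by (auto simp: adj_def joins_def pr_def)

lemma split_rt:
  assumes "(x,y) \<in> (S \<union> pr p q)\<^sup>*"
  shows "(x,y) \<in> S\<^sup>* \<or> (p,y) \<in> S\<^sup>* \<or> (q,y) \<in> S\<^sup>*"
  using assms
proof (induction rule: rtrancl_induct)
  case base then show ?case by simp
next
  case (step y z)
  from step.hyps(2) show ?case
  proof
    assume "(y,z) \<in> S"
    then show ?thesis using step.IH by (meson rtrancl.rtrancl_into_rtrancl)
  next
    assume "(y,z) \<in> pr p q"
    then show ?thesis by (auto simp: pr_def)
  qed
qed

lemma reroute:
  assumes "connected_on V ep X" "adj ep X \<subseteq> (adj ep' Y)\<^sup>*" "v \<in> V" "(v, m) \<in> (adj ep' Y)\<^sup>*"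
  shows "connected_on (insert m V) ep' Y"
proof -
  have V: "(u,w) \<in> (adj ep' Y)\<^sup>*" if "u \<in> V" "w \<in> V" for u w
    using assms(1,2) that rtrancl_subset_rtrancl unfolding connected_on_def by blast
  have m: "(m,w) \<in> (adj ep' Y)\<^sup>*" "(w,m) \<in> (adj ep' Y)\<^sup>*" if "w \<in> V" for w
    using V[OF assms(3) that] V[OF that assms(3)] assms(4) rt_sym[OF assms(4)]
    by (meson rtrancl_trans)+
  show ?thesis unfolding connected_on_def using V m by auto
qed

lemma exists_st:
  assumes "finite S" "connected_on V ep S"
  shows "contains_spanning_tree V ep S"
  using assms
proof (induction "card S" arbitrary: S rule: less_induct)
  case less
  show ?case
  proof (cases "spanning_tree V ep S")
    case True then show ?thesis unfolding contains_spanning_tree_def by blast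
  next
    case False
    then obtain x where x: "x \<in> S" "connected_on V ep (S - {x})"
      using less.prems unfolding spanning_tree_def by blast
    have "card (S - {x}) < card S" using x(1) less.prems(1) by (metis card_Diff1_less)
    then have "contains_spanning_tree V ep (S - {x})"
      using less.hyps less.prems(1) x(2) by blast
    then show ?thesis unfolding contains_spanning_tree_def by blast
  qed
qed

lemma st_conn: "contains_spanning_tree V ep S \<Longrightarrow> connected_on V ep S"
  unfolding contains_spanning_tree_def spanning_tree_def using conn_mono by blast



locale subdiv =
  fixes V :: "'v set" and E :: "'e set" and ep ep' :: "'e \<Rightarrow> 'v \<times> 'v"
    and Mnew M1 M2 M3 M4 :: 'v and b0 b b1 b2 b3 b4 :: 'e
  assumes epE: "\<forall>x\<in>E - {b0, b}. ep' x = ep x"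
    and ep0: "ep b0 = (M1, M2)" and epb: "ep b = (M3, M4)"
    and ep1: "ep' b1 = (M1, Mnew)" and ep2: "ep' b2 = (M2, Mnew)"
    and ep3: "ep' b3 = (M3, Mnew)" and ep4: "ep' b4 = (M4, Mnew)"
    and MV: "M1 \<in> V" "M2 \<in> V" "M3 \<in> V" "M4 \<in> V"
begin

lemma adj_sub:
  assumes "\<forall>x\<in>X. x \<notin> {b0,b} \<longrightarrow> x \<in> Y" "X \<subseteq> E"
    "b0 \<in> X \<Longrightarrow> (M1,M2) \<in> (adj ep' Y)\<^sup>*" "b \<in> X \<Longrightarrow> (M3,M4) \<in> (adj ep' Y)\<^sup>*"
  shows "adj ep X \<subseteq> (adj ep' Y)\<^sup>*"
proof
  fix z assume "z \<in> adj ep X"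
  then obtain u w x where z: "z = (u,w)" "x \<in> X" "joins ep x u w" by (auto simp: adj_def)
  show "z \<in> (adj ep' Y)\<^sup>*"
  proof (cases "x = b0")
    case True
    then show ?thesis using z assms(3) rt_sym[OF assms(3)] ep0 by (auto simp: joins_def)
  next
    case F0: False
    show ?thesis
    proof (cases "x = b")
      case True
      then show ?thesis using z assms(4) rt_sym[OF assms(4)] epb by (auto simp: joins_def)
    next
      case False
      then have "ep' x = ep x" "x \<in> Y" using F0 z assms(1,2) epE by auto
      then have "(u,w) \<in> adj ep' Y" using z by (auto simp: adj_def joins_def)
      then show ?thesis using z by auto
    qed
  qed
qed

lemma path2:
  assumes "k \<in> Y" "l \<in> Y" "ep' k = (p, Mnew)" "ep' l = (q, Mnew)"
  shows "(p,q) \<in> (adj ep' Y)\<^sup>*"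
proof -
  have "(p,Mnew) \<in> adj ep' Y" "(Mnew,q) \<in> adj ep' Y"
    using edge_adj[of k Y ep' p Mnew] edge_adj[of l Y ep' q Mnew] assms by auto
  then show ?thesis by (meson converse_rtrancl_into_rtrancl r_into_rtrancl)
qed

lemma caseB:
  assumes "X \<subseteq> E" "b0 \<in> X" "b \<notin> X" "connected_on V ep X"
  shows "connected_on (insert Mnew V) ep' (X - {b0} \<union> {b1,b2})"
proof -
  let ?Y = "X - {b0} \<union> {b1,b2}"
  have "adj ep X \<subseteq> (adj ep' ?Y)\<^sup>*"
    using adj_sub[of X ?Y] assms(1,3) path2[of b1 ?Y b2 M1 M2] ep1 ep2 by auto
  moreover have "(M1, Mnew) \<in> (adj ep' ?Y)\<^sup>*" using edge_adj[of b1 ?Y ep' M1 Mnew] ep1 by auto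
  ultimately show ?thesis using reroute assms(4) MV by metis
qed

lemma caseB':
  assumes "X \<subseteq> E" "b \<in> X" "b0 \<notin> X" "connected_on V ep X"
  shows "connected_on (insert Mnew V) ep' (X - {b} \<union> {b3,b4})"
proof -
  let ?Y = "X - {b} \<union> {b3,b4}"
  have "adj ep X \<subseteq> (adj ep' ?Y)\<^sup>*"
    using adj_sub[of X ?Y] assms(1,3) path2[of b3 ?Y b4 M3 M4] ep3 ep4 by auto
  moreover have "(M3, Mnew) \<in> (adj ep' ?Y)\<^sup>*" using edge_adj[of b3 ?Y ep' M3 Mnew] ep3 by auto
  ultimately show ?thesis using reroute assms(4) MV by metis
qed

lemma caseC:
  assumes "X \<subseteq> E" "b0 \<notin> X" "b \<notin> X" "connected_on V ep X" "ep' k = (p, Mnew)" "p \<in> V"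
  shows "connected_on (insert Mnew V) ep' (X \<union> {k})"
proof -
  let ?Y = "X \<union> {k}"
  have "adj ep X \<subseteq> (adj ep' ?Y)\<^sup>*"
    using adj_sub[of X ?Y] assms(1,2,3) by auto
  moreover have "(p, Mnew) \<in> (adj ep' ?Y)\<^sup>*" using edge_adj[of k ?Y ep' p Mnew] assms(5) by auto
  ultimately show ?thesis using reroute assms(4,6) by metis
qed

lemma caseA:
  assumes "X \<subseteq> E" "b0 \<in> X" "b \<in> X" "connected_on V ep X"
  shows "connected_on (insert Mnew V) ep' (X - {b0,b} \<union> {b1,b2,b3}) \<or>
         connected_on (insert Mnew V) ep' (X - {b0,b} \<union> {b1,b2,b4})"
proof (rule ccontr)
  let ?X0 = "X - {b0,b}"
  let ?Y3 = "?X0 \<union> {b1,b2,b3}" and ?Y4 = "?X0 \<union> {b1,b2,b4}"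
  let ?S = "adj ep ?X0 \<union> pr M1 M2"
  assume H: "\<not> ?thesis"
  have X0: "adj ep ?X0 = adj ep' ?X0" using adj_cong[of ?X0 ep' ep] epE assms(1) by auto
  have S3: "?S\<^sup>* \<subseteq> (adj ep' ?Y3)\<^sup>*"
  proof (rule rtrancl_subset_rtrancl)
    have "adj ep' ?X0 \<subseteq> adj ep' ?Y3" by (rule adj_mono) auto
    moreover have "pr M1 M2 \<subseteq> (adj ep' ?Y3)\<^sup>*"
      using path2[of b1 ?Y3 b2 M1 M2] path2[of b2 ?Y3 b1 M2 M1] ep1 ep2 by (auto simp: pr_def)
    ultimately show "?S \<subseteq> (adj ep' ?Y3)\<^sup>*" using X0 by auto
  qed
  have S4: "?S\<^sup>* \<subseteq> (adj ep' ?Y4)\<^sup>*"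
  proof (rule rtrancl_subset_rtrancl)
    have "adj ep' ?X0 \<subseteq> adj ep' ?Y4" by (rule adj_mono) auto
    moreover have "pr M1 M2 \<subseteq> (adj ep' ?Y4)\<^sup>*"
      using path2[of b1 ?Y4 b2 M1 M2] path2[of b2 ?Y4 b1 M2 M1] ep1 ep2 by (auto simp: pr_def)
    ultimately show "?S \<subseteq> (adj ep' ?Y4)\<^sup>*" using X0 by auto
  qed
  have n41: "(M4, M1) \<notin> (adj ep' ?Y3)\<^sup>*"
  proof
    assume a: "(M4, M1) \<in> (adj ep' ?Y3)\<^sup>*"
    have "(M3, M1) \<in> (adj ep' ?Y3)\<^sup>*" using path2[of b3 ?Y3 b1 M3 M1] ep3 ep1 by auto
    then have "(M3, M4) \<in> (adj ep' ?Y3)\<^sup>*" using rt_sym[OF a] by (meson rtrancl_trans)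
    then have "adj ep X \<subseteq> (adj ep' ?Y3)\<^sup>*"
      using adj_sub[of X ?Y3] assms(1) path2[of b1 ?Y3 b2 M1 M2] ep1 ep2 by auto
    moreover have "(M1, Mnew) \<in> (adj ep' ?Y3)\<^sup>*" using edge_adj[of b1 ?Y3 ep' M1 Mnew] ep1 by auto
    ultimately have "connected_on (insert Mnew V) ep' ?Y3" using reroute assms(4) MV by metis
    then show False using H by blast
  qed
  have n31: "(M3, M1) \<notin> (adj ep' ?Y4)\<^sup>*"
  proof
    assume a: "(M3, M1) \<in> (adj ep' ?Y4)\<^sup>*"
    have "(M1, M4) \<in> (adj ep' ?Y4)\<^sup>*" using path2[of b1 ?Y4 b4 M1 M4] ep4 ep1 by auto
    then have "(M3, M4) \<in> (adj ep' ?Y4)\<^sup>*" using a by (meson rtrancl_trans)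
    then have "adj ep X \<subseteq> (adj ep' ?Y4)\<^sup>*"
      using adj_sub[of X ?Y4] assms(1) path2[of b1 ?Y4 b2 M1 M2] ep1 ep2 by auto
    moreover have "(M1, Mnew) \<in> (adj ep' ?Y4)\<^sup>*" using edge_adj[of b1 ?Y4 ep' M1 Mnew] ep1 by auto
    ultimately have "connected_on (insert Mnew V) ep' ?Y4" using reroute assms(4) MV by metis
    then show False using H by blast
  qed
  have "X = ?X0 \<union> {b0} \<union> {b}" using assms(2,3) by auto
  then have "adj ep X = ?S \<union> pr M3 M4"
    using adj_Un adj_single[of ep b0 M1 M2] adj_single[of ep b M3 M4] ep0 epb by metis
  moreover have "(M3, M1) \<in> (adj ep X)\<^sup>*" using assms(4) MV unfolding connected_on_def by blast
  ultimately have "(M3,M1) \<in> ?S\<^sup>* \<or> (M4,M1) \<in> ?S\<^sup>*" using split_rt by fastforce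
  then show False using S3 S4 n41 n31 by blast
qed

end


lemma dc_intro:
  assumes "finite F" "Bk \<subseteq> F" "Bu \<subseteq> F" "Bk \<inter> Bu = {}" "\<forall>e\<in>Bk. kd e = Diffusive"
    "connected_on V ep Bk" "connected_on V ep Bu"
  shows "doubly_connected V F ep kd"
proof -
  have "finite Bk" "finite Bu" using assms(1,2,3) finite_subset by auto
  then have "contains_spanning_tree V ep Bk" "contains_spanning_tree V ep Bu"
    using assms(6,7) exists_st by auto
  moreover have "\<forall>e\<in>Bu. kd e = BlueSolid \<or> kd e = Diffusive"
    by (metis edge_kind.exhaust)
  ultimately show ?thesis unfolding doubly_connected_def
    using assms(2-5) by blast
qed

context subdiv
begin

lemma dc_transfer:
  assumes fin: "finite E" and F: "F \<subseteq> E" "b0 \<in> F" "b \<in> F"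
    and kd: "kd b0 = Diffusive" "kd b = Diffusive"
    "\<forall>x\<in>E-{b0,b}. kd' x = kd x" "kd' b1 = Diffusive" "kd' b2 = Diffusive"
    "kd' b3 = Diffusive" "kd' b4 = Diffusive"
    and nE: "b1 \<notin> E" "b2 \<notin> E" "b3 \<notin> E" "b4 \<notin> E" "distinct [b1,b2,b3,b4]"
    and dc: "doubly_connected V F ep kd"
  shows "doubly_connected (insert Mnew V) (F - {b0,b} \<union> {b1,b2,b3,b4}) ep' kd'"
proof -
  let ?F = "F - {b0,b} \<union> {b1,b2,b3,b4}"
  obtain Bk Bu where B: "Bk \<subseteq> F" "Bu \<subseteq> F" "Bk \<inter> Bu = {}" "\<forall>e\<in>Bk. kd e = Diffusive"
    "connected_on V ep Bk" "connected_on V ep Bu"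
    using dc st_conn unfolding doubly_connected_def by metis
  have BE: "Bk \<subseteq> E" "Bu \<subseteq> E" using B F by auto
  have finF: "finite ?F" using fin F finite_subset by blast
  have kdk: "\<forall>e\<in>Bk - {b0,b}. kd' e = Diffusive"
  proof
    fix e assume "e \<in> Bk - {b0,b}"
    then have "e \<in> E - {b0,b}" "kd e = Diffusive" using BE B(4) by auto
    then show "kd' e = Diffusive" using kd(3) by auto
  qed
  note I = dc_intro[OF finF]
  have nB: "b1 \<notin> Bk" "b2 \<notin> Bk" "b3 \<notin> Bk" "b4 \<notin> Bk"
    "b1 \<notin> Bu" "b2 \<notin> Bu" "b3 \<notin> Bu" "b4 \<notin> Bu" using BE nE by auto
  have dst: "b1 \<noteq> b2" "b1 \<noteq> b3" "b1 \<noteq> b4" "b2 \<noteq> b3" "b2 \<noteq> b4" "b3 \<noteq> b4"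
    using nE(5) by auto
  have nb: "b1 \<noteq> b0" "b2 \<noteq> b0" "b3 \<noteq> b0" "b4 \<noteq> b0"
    "b1 \<noteq> b" "b2 \<noteq> b" "b3 \<noteq> b" "b4 \<noteq> b" using nE F by auto
  have kdn: "\<forall>x\<in>{b1,b2,b3,b4}. kd' x = Diffusive" using kd by auto
  show ?thesis
  proof (cases "b0 \<in> Bk")
    case k0: True
    then have "b0 \<notin> Bu" using B(3) by auto
    show ?thesis
    proof (cases "b \<in> Bk")
      case True
      then have "b \<notin> Bu" using B(3) by auto
      from caseA[OF BE(1) k0 True B(5)] obtain k k' where
        kk: "connected_on (insert Mnew V) ep' (Bk - {b0,b} \<union> {b1,b2,k})"
          "(k = b3 \<and> k' = b4) \<or> (k = b4 \<and> k' = b3)" by blast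
      have c2: "connected_on (insert Mnew V) ep' (Bu \<union> {k'})"
        using kk(2) caseC[OF BE(2) \<open>b0 \<notin> Bu\<close> \<open>b \<notin> Bu\<close> B(6), of k'] ep3 ep4 MV by auto
      show ?thesis
        apply (rule I[OF _ _ _ _ kk(1) c2]) using k0 True \<open>b0 \<notin> Bu\<close> \<open>b \<notin> Bu\<close> kk(2) B(1,2,3) kdk kdn nB dst nb by auto
    next
      case False
      note c1 = caseB[OF BE(1) k0 False B(5)]
      show ?thesis
      proof (cases "b \<in> Bu")
        case True
        note c2 = caseB'[OF BE(2) True \<open>b0 \<notin> Bu\<close> B(6)]
        show ?thesis apply (rule I[OF _ _ _ _ c1 c2]) using k0 False True \<open>b0 \<notin> Bu\<close> B(1,2,3) kdk kdn nB dst nb by auto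
      next
        case F2: False
        note c2 = caseC[OF BE(2) \<open>b0 \<notin> Bu\<close> F2 B(6) ep3 MV(3)]
        show ?thesis apply (rule I[OF _ _ _ _ c1 c2]) using k0 False F2 \<open>b0 \<notin> Bu\<close> B(1,2,3) kdk kdn nB dst nb by auto
      qed
    qed
  next
    case nk0: False
    show ?thesis
    proof (cases "b0 \<in> Bu")
      case u0: True
      show ?thesis
      proof (cases "b \<in> Bu")
        case True
        then have "b \<notin> Bk" using B(3) by auto
        from caseA[OF BE(2) u0 True B(6)] obtain k k' where
          kk: "connected_on (insert Mnew V) ep' (Bu - {b0,b} \<union> {b1,b2,k})"
            "(k = b3 \<and> k' = b4) \<or> (k = b4 \<and> k' = b3)" by blast
        have c1: "connected_on (insert Mnew V) ep' (Bk \<union> {k'})"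
          using kk(2) caseC[OF BE(1) nk0 \<open>b \<notin> Bk\<close> B(5), of k'] ep3 ep4 MV by auto
        show ?thesis
          apply (rule I[OF _ _ _ _ c1 kk(1)]) using u0 True \<open>b \<notin> Bk\<close> nk0 kk(2) B(1,2,3) kdk kdn nB dst nb by auto
      next
        case False
        note c2 = caseB[OF BE(2) u0 False B(6)]
        show ?thesis
        proof (cases "b \<in> Bk")
          case True
          note c1 = caseB'[OF BE(1) True nk0 B(5)]
          show ?thesis apply (rule I[OF _ _ _ _ c1 c2]) using u0 False True nk0 B(1,2,3) kdk kdn nB dst nb by auto
        next
          case F2: False
          note c1 = caseC[OF BE(1) nk0 F2 B(5) ep3 MV(3)]
          show ?thesis apply (rule I[OF _ _ _ _ c1 c2]) using u0 False F2 nk0 B(1,2,3) kdk kdn nB dst nb by auto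
        qed
      qed
    next
      case nu0: False
      show ?thesis
      proof (cases "b \<in> Bk")
        case True
        then have "b \<notin> Bu" using B(3) by auto
        note c1 = caseB'[OF BE(1) True nk0 B(5)]
        note c2 = caseC[OF BE(2) nu0 \<open>b \<notin> Bu\<close> B(6) ep1 MV(1)]
        show ?thesis apply (rule I[OF _ _ _ _ c1 c2]) using nk0 nu0 True \<open>b \<notin> Bu\<close> B(1,2,3) kdk kdn nB dst nb by auto
      next
        case nkb: False
        show ?thesis
        proof (cases "b \<in> Bu")
          case True
          note c2 = caseB'[OF BE(2) True nu0 B(6)]
          note c1 = caseC[OF BE(1) nk0 nkb B(5) ep1 MV(1)]
          show ?thesis apply (rule I[OF _ _ _ _ c1 c2]) using nk0 nu0 nkb True B(1,2,3) kdk kdn nB dst nb by auto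
        next
          case False
          note c2 = caseC[OF BE(2) nu0 False B(6) ep3 MV(3)]
          note c1 = caseC[OF BE(1) nk0 nkb B(5) ep1 MV(1)]
          show ?thesis apply (rule I[OF _ _ _ _ c1 c2]) using nk0 nu0 nkb False B(1,2,3) kdk kdn nB dst nb by auto
        qed
      qed
    qed
  qed
qed

end


theorem claimA5:
  fixes V :: "'v set" and E :: "'e set" and ep :: "'e \<Rightarrow> 'v \<times> 'v" and kd :: "'e \<Rightarrow> edge_kind"
    and V' :: "'v set" and E' :: "'e set" and ep' :: "'e \<Rightarrow> 'v \<times> 'v" and kd' :: "'e \<Rightarrow> edge_kind"
    and Mnew M1 M2 M3 M4 :: 'v and b0 b b1 b2 b3 b4 e :: 'e
  assumes G: "molecular_graph V E ep kd"
    and dc: "doubly_connected V E ep kd"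
    and b0: "b0 \<in> E" "kd b0 = Diffusive" "ep b0 = (M1, M2)"
    and b: "b \<in> E" "kd b = Diffusive" "ep b = (M3, M4)" "b \<noteq> b0"
    and new_vertex: "Mnew \<notin> V" "V' = insert Mnew V"
    and new_edges: "b1 \<notin> E" "b2 \<notin> E" "b3 \<notin> E" "b4 \<notin> E"
      "distinct [b1, b2, b3, b4]"
    and E': "E' = (E - {b0, b}) \<union> {b1, b2, b3, b4}"
    and ep': "\<forall>x\<in>E - {b0, b}. ep' x = ep x"
      "ep' b1 = (M1, Mnew)" "ep' b2 = (M2, Mnew)" "ep' b3 = (M3, Mnew)" "ep' b4 = (M4, Mnew)"
    and kd': "\<forall>x\<in>E - {b0, b}. kd' x = kd x"
      "kd' b1 = Diffusive" "kd' b2 = Diffusive" "kd' b3 = Diffusive" "kd' b4 = Diffusive"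
    and red: "redundant V E ep kd e"
  shows "redundant V' E' ep' kd' e"
  proof -
  have eE: "e \<in> E" and ke: "kd e = BlueSolid" and dE: "doubly_connected V (E - {e}) ep kd"
    using red unfolding redundant_def by auto
  have finE: "finite E" using G unfolding molecular_graph_def by auto
  have MV: "M1 \<in> V" "M2 \<in> V" "M3 \<in> V" "M4 \<in> V"
    using G b0 b unfolding molecular_graph_def by (metis fst_conv snd_conv)+
  interpret subdiv V E ep ep' Mnew M1 M2 M3 M4 b0 b b1 b2 b3 b4
    using ep'(1) b0(3) b(3) ep'(2-5) MV by unfold_locales auto
  have eb: "e \<noteq> b0" "e \<noteq> b" using ke b0(2) b(2) by auto
  have en: "e \<noteq> b1" "e \<noteq> b2" "e \<noteq> b3" "e \<noteq> b4" using eE new_edges by auto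
  have d1: "doubly_connected V' E' ep' kd'"
    using dc_transfer[where F=E and kd=kd and kd'=kd'] finE b0 b kd' new_edges dc
    unfolding E' new_vertex(2) by auto
  have d2: "doubly_connected V' (E' - {e}) ep' kd'"
  proof -
    have "E' - {e} = (E - {e}) - {b0,b} \<union> {b1,b2,b3,b4}" using E' en by auto
    then show ?thesis
      using dc_transfer[where F="E - {e}" and kd=kd and kd'=kd'] finE b0 b kd' new_edges dE eb
      unfolding new_vertex(2) by auto
  qed
  have "e \<in> E'" using E' eE eb by auto
  moreover have "kd' e = BlueSolid" using kd'(1) eE eb ke by auto
  ultimately show ?thesis unfolding redundant_def using d1 d2 by auto
qed

end
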